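(* Let $A$ be a physical system of dimension $m$ whose Hamiltonian $H^A=\sum_{x=1}^m a_x|x\rangle\langle x|$ has a non-degenerate Bohr spectrum, and let $\mathcal{E}:A\to A$ be a quantum channel. Then $\mathcal{E}$ is time-translation covariant if and only if there exist a conditional probability distribution $\{p_{y|x}\}_{x,y\in[m]}$ (i.e. $p_{y|x}\ge0$ and $\sum_y p_{y|x}=1$ for every $x$) and an $m\times m$ positive semidefinite matrix $Q=(q_{xy})$ with diagonal entries $q_{xx}=p_{x|x}$ for all $x\in[m]$, such that the Choi matrix of $\mathcal{E}$ is $$J_\mathcal{E}^{A\tilde A}=\sum_{x,y\in[m]}p_{y|x}|x\rangle\langle x|^A\otimes|y\rangle\langle y|^{\tilde A}+\sum_{x\neq y,\ x,y\in[m]}q_{xy}|x\rangle\langle y|^A\otimes|x\rangle\langle y|^{\tilde A}.$$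
   Context: $H^A$ has a non-degenerate Bohr spectrum if for all $x,y,x',y'\in[m]$: $a_x-a_y=a_{x'}-a_{y'}$ holds iff ($x=x'$ and $y=y'$) or ($x=y$ and $x'=y'$). A channel $\mathcal{E}:A\to A$ is time-translation covariant if $\mathcal{E}(e^{-iH^At}\rho e^{iH^At})=e^{-iH^At}\mathcal{E}(\rho)e^{iH^At}$ for all $t\in\mathbb{R}$ and all states $\rho$. The Choi matrix of $\mathcal{E}$ is $J_\mathcal{E}^{A\tilde A}=\sum_{x,x'\in[m]}|x\rangle\langle x'|^A\otimes\mathcal{E}(|x\rangle\langle x'|)^{\tilde A}$, where $\tilde A$ is a copy of $A$. *)

theory Defs
  imports Complex_Main "HOL-Library.Function_Algebras"
begin

text \<open>Operators on a finite-dimensional Hilbert space with orthonormal basis indexed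
by a finite type 'i are represented as matrices  'i \<Rightarrow> 'i \<Rightarrow> complex.\<close>

type_synonym 'i op = "'i \<Rightarrow> 'i \<Rightarrow> complex"

definition mmult :: "'i::finite op \<Rightarrow> 'i op \<Rightarrow> 'i op" where
  "mmult A B = (\<lambda>x y. \<Sum>z\<in>UNIV. A x z * B z y)"

definition adjoint :: "'i op \<Rightarrow> 'i op" where
  "adjoint A = (\<lambda>x y. cnj (A y x))"

definition smult_op :: "complex \<Rightarrow> 'i op \<Rightarrow> 'i op" where
  "smult_op c A = (\<lambda>x y. c * A x y)"

definition trace_op :: "'i::finite op \<Rightarrow> complex" where
  "trace_op A = (\<Sum>x\<in>UNIV. A x x)"

definition ketbra :: "'i \<Rightarrow> 'i \<Rightarrow> 'i op" where
  "ketbra x y = (\<lambda>a b. if a = x \<and> b = y then 1 else 0)"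

definition kron :: "'i op \<Rightarrow> 'j op \<Rightarrow> ('i \<times> 'j) op" where
  "kron A B = (\<lambda>(a, b) (a', b'). A a a' * B b b')"

text \<open>Positive semidefiniteness of the principal block on index set S
  (over complex scalars this includes Hermiticity).\<close>
definition psd_on :: "'i set \<Rightarrow> 'i op \<Rightarrow> bool" where
  "psd_on S M \<longleftrightarrow> (\<forall>v :: 'i \<Rightarrow> complex.
      let q = (\<Sum>i\<in>S. \<Sum>j\<in>S. cnj (v i) * M i j * v j) in Im q = 0 \<and> Re q \<ge> 0)"

definition psd :: "'i::finite op \<Rightarrow> bool" where
  "psd M \<longleftrightarrow> psd_on UNIV M"

definition density_op :: "'i::finite op \<Rightarrow> bool" where
  "density_op \<rho> \<longleftrightarrow> psd \<rho> \<and> trace_op \<rho> = 1"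

definition linear_superop :: "('i op \<Rightarrow> 'j op) \<Rightarrow> bool" where
  "linear_superop E \<longleftrightarrow> (\<forall>X Y. E (X + Y) = E X + E Y) \<and> (\<forall>c X. E (smult_op c X) = smult_op c (E X))"

text \<open>id_k \<otimes> E acting on operators on C^k \<otimes> H (ancilla indices nat, restricted to {..<k}).\<close>
definition id_tensor :: "('i op \<Rightarrow> 'j op) \<Rightarrow> (nat \<times> 'i) op \<Rightarrow> (nat \<times> 'j) op" where
  "id_tensor E X = (\<lambda>(r, a) (s, b). E (\<lambda>a' b'. X (r, a') (s, b')) a b)"

definition completely_positive :: "('i::finite op \<Rightarrow> 'j::finite op) \<Rightarrow> bool" where
  "completely_positive E \<longleftrightarrow> (\<forall>k X. psd_on ({..<k} \<times> UNIV) X \<longrightarrow> psd_on ({..<k} \<times> UNIV) (id_tensor E X))"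

definition trace_preserving :: "('i::finite op \<Rightarrow> 'j::finite op) \<Rightarrow> bool" where
  "trace_preserving E \<longleftrightarrow> (\<forall>X. trace_op (E X) = trace_op X)"

definition quantum_channel :: "('i::finite op \<Rightarrow> 'j::finite op) \<Rightarrow> bool" where
  "quantum_channel E \<longleftrightarrow> linear_superop E \<and> completely_positive E \<and> trace_preserving E"

definition hamiltonian :: "('i \<Rightarrow> real) \<Rightarrow> 'i op" where
  "hamiltonian a = (\<lambda>x y. if x = y then complex_of_real (a x) else 0)"

definition evol :: "('i \<Rightarrow> real) \<Rightarrow> real \<Rightarrow> 'i op" where
  "evol a t = (\<lambda>x y. if x = y then exp (- \<i> * complex_of_real (a x * t)) else 0)"

definition nondegenerate_bohr :: "('i \<Rightarrow> real) \<Rightarrow> bool" where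
  "nondegenerate_bohr a \<longleftrightarrow> (\<forall>x y x' y'. a x - a y = a x' - a y' \<longleftrightarrow>
       (x = x' \<and> y = y') \<or> (x = y \<and> x' = y'))"

definition time_translation_covariant :: "('i::finite \<Rightarrow> real) \<Rightarrow> ('i op \<Rightarrow> 'i op) \<Rightarrow> bool" where
  "time_translation_covariant a E \<longleftrightarrow> (\<forall>t \<rho>. density_op \<rho> \<longrightarrow>
     E (mmult (mmult (evol a t) \<rho>) (adjoint (evol a t)))
       = mmult (mmult (evol a t) (E \<rho>)) (adjoint (evol a t)))"

definition choi :: "('i::finite op \<Rightarrow> 'i op) \<Rightarrow> ('i \<times> 'i) op" where
  "choi E = (\<Sum>x\<in>UNIV. \<Sum>x'\<in>UNIV. kron (ketbra x x') (E (ketbra x x')))"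

end

theory Submission
  imports Defs
begin

lemma sum_fun_app: "(sum f A) x = sum (\<lambda>i. f i x) A"
  by (induction A rule: infinite_finite_induct) auto

lemma sum_fun_app2: "(sum f A) x y = sum (\<lambda>i. f i x y) A"
  by (simp add: sum_fun_app)

lemma sum2_delta:
  fixes f :: "'a::finite \<Rightarrow> 'b::finite \<Rightarrow> 'c::comm_monoid_add"
  shows "(\<Sum>x\<in>UNIV. \<Sum>y\<in>UNIV. if a = x \<and> b = y then f x y else 0) = f a b"
proof -
  have "\<And>x. (\<Sum>y\<in>UNIV. if a = x \<and> b = y then f x y else 0) = (if a = x then f x b else 0)"
    by (simp add: sum.delta')
  then show ?thesis by (simp add: sum.delta')
qed

lemma if0_mult: "(if P then c else 0) * (x::'a::mult_zero) = (if P then c * x else 0)"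
  "x * (if P then c else 0) = (if P then x * c else 0)"
  by auto

lemma ketbra_mult: "ketbra x y a b * z = (if a = x \<and> b = y then z else 0)"
  "z * ketbra x y a b = (if a = x \<and> b = y then z else 0)"
  by (auto simp: ketbra_def)

lemma choi_apply: "choi E (a,b) (a',b') = E (ketbra a a') b b'"
proof -
  have "choi E (a,b) (a',b') = (\<Sum>x\<in>UNIV. \<Sum>x'\<in>UNIV. ketbra x x' a a' * E (ketbra x x') b b')"
    unfolding choi_def by (simp add: sum_fun_app2 kron_def)
  also have "\<dots> = E (ketbra a a') b b'"
    unfolding ketbra_mult by (rule sum2_delta)
  finally show ?thesis .
qed

lemma rhs_apply:
  fixes p :: "'n::finite \<Rightarrow> 'n \<Rightarrow> real" and Q :: "'n op"
  shows "((\<Sum>x\<in>UNIV. \<Sum>y\<in>UNIV.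
                   smult_op (complex_of_real (p x y)) (kron (ketbra x x) (ketbra y y)))
              + (\<Sum>x\<in>UNIV. \<Sum>y\<in>UNIV - {x}.
                   smult_op (Q x y) (kron (ketbra x y) (ketbra x y)))) (a,b) (a',b')
   = (if a = a' then (if b = b' then complex_of_real (p a b) else 0)
      else if b = a \<and> b' = a' then Q a a' else 0)"
proof -
  have 1: "(\<Sum>x\<in>UNIV. \<Sum>y\<in>UNIV.
                   smult_op (complex_of_real (p x y)) (kron (ketbra x x) (ketbra y y))) (a,b) (a',b')
      = (\<Sum>x\<in>UNIV. \<Sum>y\<in>UNIV. if a = x \<and> b = y then (if a = a' \<and> b = b' then complex_of_real (p x y) else 0) else 0)"
    unfolding sum_fun_app2 smult_op_def kron_def ketbra_def by (intro sum.cong refl) auto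
  have 2: "(\<Sum>x\<in>UNIV. \<Sum>y\<in>UNIV - {x}.
                   smult_op (Q x y) (kron (ketbra x y) (ketbra x y))) (a,b) (a',b')
      = (\<Sum>x\<in>UNIV. \<Sum>y\<in>UNIV. if a = x \<and> a' = y then (if a \<noteq> a' \<and> b = a \<and> b' = a' then Q x y else 0) else 0)"
  proof -
    have "\<And>x. (\<Sum>y\<in>UNIV - {x}. smult_op (Q x y) (kron (ketbra x y) (ketbra x y)) (a,b) (a',b'))
       = (\<Sum>y\<in>UNIV. if y = x then 0 else smult_op (Q x y) (kron (ketbra x y) (ketbra x y)) (a,b) (a',b'))"
    proof -
      fix x
      let ?f = "\<lambda>y. smult_op (Q x y) (kron (ketbra x y) (ketbra x y)) (a,b) (a',b')"
      have "(\<Sum>y\<in>UNIV. if y = x then 0 else ?f y) = (\<Sum>y\<in>UNIV - {x}. if y = x then 0 else ?f y)"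
        by (rule sum.mono_neutral_right) auto
      also have "\<dots> = (\<Sum>y\<in>UNIV - {x}. ?f y)" by (rule sum.cong) auto
      finally show "(\<Sum>y\<in>UNIV - {x}. ?f y) = (\<Sum>y\<in>UNIV. if y = x then 0 else ?f y)" by simp
    qed
    note X = this
    have "(\<Sum>x\<in>UNIV. \<Sum>y\<in>UNIV - {x}.
                   smult_op (Q x y) (kron (ketbra x y) (ketbra x y))) (a,b) (a',b')
      = (\<Sum>x\<in>UNIV. \<Sum>y\<in>UNIV - {x}. smult_op (Q x y) (kron (ketbra x y) (ketbra x y)) (a,b) (a',b'))"
      by (simp only: sum_fun_app2)
    also have "\<dots> = (\<Sum>x\<in>UNIV. \<Sum>y\<in>UNIV. if y = x then 0 else smult_op (Q x y) (kron (ketbra x y) (ketbra x y)) (a,b) (a',b'))"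
      by (rule sum.cong[OF refl], rule X)
    also have "\<dots> = (\<Sum>x\<in>UNIV. \<Sum>y\<in>UNIV. if a = x \<and> a' = y then (if a \<noteq> a' \<and> b = a \<and> b' = a' then Q x y else 0) else 0)"
      unfolding smult_op_def kron_def ketbra_def by (intro sum.cong refl) auto
    finally show ?thesis .
  qed
  show ?thesis unfolding plus_fun_def 1 2 sum2_delta by auto
qed

lemma linear_zero: "linear_superop E \<Longrightarrow> E 0 = 0"
  unfolding linear_superop_def by (metis add_cancel_right_right)

lemma linear_sum: "linear_superop E \<Longrightarrow> E (sum f A) = (\<Sum>i\<in>A. E (f i))"
proof (induction A rule: infinite_finite_induct)
  case (infinite A)
  then show ?case using linear_zero[of E] by (simp add: zero_fun_def)
next
  case empty
  then show ?case using linear_zero[of E] by (simp add: zero_fun_def)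
next
  case (insert x F)
  then show ?case unfolding linear_superop_def by (metis sum.insert)
qed

lemma expand: "(X::'n::finite op) = (\<Sum>x\<in>UNIV. \<Sum>y\<in>UNIV. smult_op (X x y) (ketbra x y))"
proof (intro ext)
  fix u v
  show "X u v = (\<Sum>x\<in>UNIV. \<Sum>y\<in>UNIV. smult_op (X x y) (ketbra x y)) u v"
    unfolding sum_fun_app2 smult_op_def ketbra_mult by (simp add: sum2_delta)
qed

lemma linear_expand:
  assumes "linear_superop E"
  shows "E (X::'n::finite op) u v = (\<Sum>x\<in>UNIV. \<Sum>y\<in>UNIV. X x y * E (ketbra x y) u v)"
proof -
  have "E X = E (\<Sum>x\<in>UNIV. \<Sum>y\<in>UNIV. smult_op (X x y) (ketbra x y))"
    using expand[of X] by simp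
  also have "\<dots> = (\<Sum>x\<in>UNIV. \<Sum>y\<in>UNIV. smult_op (X x y) (E (ketbra x y)))"
    using assms by (simp add: linear_sum) (simp add: linear_superop_def)
  finally show ?thesis by (simp add: sum_fun_app2 smult_op_def)
qed

definition phase :: "('i \<Rightarrow> real) \<Rightarrow> real \<Rightarrow> 'i \<Rightarrow> 'i \<Rightarrow> complex" where
  "phase a t u v = cis (- ((a u - a v) * t))"

lemma exp_cis: "exp (- \<i> * complex_of_real y) = cis (- y)"
  by (simp add: cis_conv_exp)

lemma conj_apply:
  "mmult (mmult (evol a t) X) (adjoint (evol a t)) = (\<lambda>u v. phase a t u v * (X::'n::finite op) u v)"
proof (intro ext)
  fix u v
  have e1: "\<And>z. mmult (evol a t) X u z = exp (- \<i> * complex_of_real (a u * t)) * X u z"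
    unfolding mmult_def evol_def by (simp add: if0_mult sum.delta)
  have "mmult (mmult (evol a t) X) (adjoint (evol a t)) u v
     = exp (- \<i> * complex_of_real (a u * t)) * X u v * cnj (exp (- \<i> * complex_of_real (a v * t)))"
  proof -
    have e2: "\<And>z. adjoint (evol a t) z v = (if v = z then cnj (exp (- \<i> * complex_of_real (a v * t))) else 0)"
      by (simp add: adjoint_def evol_def)
    show ?thesis unfolding mmult_def[of "mmult _ _"] e1 e2 if0_mult by (simp add: sum.delta)
  qed
  also have "\<dots> = phase a t u v * X u v"
  proof -
    have "exp (- \<i> * complex_of_real (a u * t)) * X u v * cnj (exp (- \<i> * complex_of_real (a v * t)))
      = (cis (- (a u * t)) * cis (a v * t)) * X u v" unfolding exp_cis cis_cnj by simp
    also have "\<dots> = phase a t u v * X u v" unfolding cis_mult phase_def by (simp add: algebra_simps)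
    finally show ?thesis .
  qed
  finally show "mmult (mmult (evol a t) X) (adjoint (evol a t)) u v = phase a t u v * X u v" .
qed


lemma psd_rank1: "psd_on S (\<lambda>i j. w i * cnj (w j))"
  unfolding psd_on_def Let_def
proof
  fix v :: "'a \<Rightarrow> complex"
  let ?s = "\<Sum>i\<in>S. cnj (v i) * w i"
  have "?s * cnj ?s = ?s * (\<Sum>j\<in>S. v j * cnj (w j))" by simp
  also have "\<dots> = (\<Sum>i\<in>S. \<Sum>j\<in>S. (cnj (v i) * w i) * (v j * cnj (w j)))"
    by (rule sum_product)
  finally have "(\<Sum>i\<in>S. \<Sum>j\<in>S. cnj (v i) * (w i * cnj (w j)) * v j) = ?s * cnj ?s"
    by (simp add: mult_ac)
  also have "\<dots> = complex_of_real ((cmod ?s)^2)"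
    by (rule complex_norm_square[symmetric])
  finally show "Im (\<Sum>i\<in>S. \<Sum>j\<in>S. cnj (v i) * (w i * cnj (w j)) * v j) = 0 \<and>
     0 \<le> Re (\<Sum>i\<in>S. \<Sum>j\<in>S. cnj (v i) * (w i * cnj (w j)) * v j)" by simp
qed

lemma psd_smult: assumes "psd_on S M" "c \<ge> 0"
  shows "psd_on S (smult_op (complex_of_real c) M)"
  unfolding psd_on_def Let_def
proof
  fix v :: "'a \<Rightarrow> complex"
  let ?q = "\<Sum>i\<in>S. \<Sum>j\<in>S. cnj (v i) * M i j * v j"
  have q: "Im ?q = 0 \<and> Re ?q \<ge> 0" using assms(1) unfolding psd_on_def Let_def by blast
  have "(\<Sum>i\<in>S. \<Sum>j\<in>S. cnj (v i) * smult_op (complex_of_real c) M i j * v j) = complex_of_real c * ?q"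
    by (simp add: smult_op_def sum_distrib_left mult_ac)
  then show "Im (\<Sum>i\<in>S. \<Sum>j\<in>S. cnj (v i) * smult_op (complex_of_real c) M i j * v j) = 0 \<and>
     0 \<le> Re (\<Sum>i\<in>S. \<Sum>j\<in>S. cnj (v i) * smult_op (complex_of_real c) M i j * v j)"
    using q assms(2) by simp
qed

lemma cnj01: "cnj (if P then 1 else 0) = (if P then 1 else 0)" by simp

lemma psd_diag: assumes "psd M" shows "Im (M y y) = 0 \<and> Re (M y y) \<ge> 0"
proof -
  let ?v = "\<lambda>i. if i = y then 1 else (0::complex)"
  have "(\<Sum>i\<in>UNIV. \<Sum>j\<in>UNIV. cnj (?v i) * M i j * ?v j) = M y y"
    by (simp add: if0_mult sum.delta cnj01)
  moreover have "Im (\<Sum>i\<in>UNIV. \<Sum>j\<in>UNIV. cnj (?v i) * M i j * ?v j) = 0 \<and> Re (\<Sum>i\<in>UNIV. \<Sum>j\<in>UNIV. cnj (?v i) * M i j * ?v j) \<ge> 0"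
    using assms unfolding psd_def psd_on_def Let_def by (rule spec)
  ultimately show ?thesis by simp
qed

lemma sum_emb:
  assumes "finite S" "inj \<phi>" "range \<phi> \<subseteq> S"
  shows "(\<Sum>i\<in>S. if i \<in> range \<phi> then G i else 0) = (\<Sum>x\<in>UNIV. G (\<phi> x))"
proof -
  have "(\<Sum>i\<in>S. if i \<in> range \<phi> then G i else 0) = (\<Sum>i\<in>range \<phi>. if i \<in> range \<phi> then G i else 0)"
    by (rule sum.mono_neutral_right) (use assms in auto)
  also have "\<dots> = (\<Sum>i\<in>range \<phi>. G i)" by simp
  also have "\<dots> = (\<Sum>x\<in>UNIV. G (\<phi> x))" using assms(2) by (simp add: sum.reindex)
  finally show ?thesis .
qed

lemma psd_sub:
  assumes "psd_on S M" "finite S" "inj \<phi>" "range \<phi> \<subseteq> S"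
  shows "psd (\<lambda>x y. M (\<phi> x) (\<phi> y))"
  unfolding psd_def psd_on_def Let_def
proof
  fix v
  define V :: "_ \<Rightarrow> complex" where "V i = (if i \<in> range \<phi> then v (inv \<phi> i) else 0)" for i
  have q: "let q = (\<Sum>i\<in>S. \<Sum>j\<in>S. cnj (V i) * M i j * V j) in Im q = 0 \<and> Re q \<ge> 0"
    using assms(1) unfolding psd_on_def by blast
  have inner: "(\<Sum>j\<in>S. cnj (V i) * M i j * V j) = (\<Sum>y\<in>UNIV. cnj (V i) * M i (\<phi> y) * v y)" for i
  proof -
    have "(\<Sum>j\<in>S. cnj (V i) * M i j * V j) = (\<Sum>j\<in>S. if j \<in> range \<phi> then cnj (V i) * M i j * v (inv \<phi> j) else 0)"
      by (rule sum.cong) (auto simp: V_def)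
    also have "\<dots> = (\<Sum>y\<in>UNIV. cnj (V i) * M i (\<phi> y) * v (inv \<phi> (\<phi> y)))"
      by (rule sum_emb[OF assms(2-4)])
    finally show ?thesis using assms(3) by simp
  qed
  have "(\<Sum>i\<in>S. \<Sum>j\<in>S. cnj (V i) * M i j * V j) = (\<Sum>i\<in>S. \<Sum>y\<in>UNIV. cnj (V i) * M i (\<phi> y) * v y)"
    using inner by simp
  also have "\<dots> = (\<Sum>i\<in>S. if i \<in> range \<phi> then (\<Sum>y\<in>UNIV. cnj (v (inv \<phi> i)) * M i (\<phi> y) * v y) else 0)"
    by (rule sum.cong) (auto simp: V_def)
  also have "\<dots> = (\<Sum>x\<in>UNIV. \<Sum>y\<in>UNIV. cnj (v (inv \<phi> (\<phi> x))) * M (\<phi> x) (\<phi> y) * v y)"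
    by (rule sum_emb[OF assms(2-4)])
  also have "\<dots> = (\<Sum>x\<in>UNIV. \<Sum>y\<in>UNIV. cnj (v x) * M (\<phi> x) (\<phi> y) * v y)"
    using assms(3) by simp
  finally have eq: "(\<Sum>i\<in>S. \<Sum>j\<in>S. cnj (V i) * M i j * V j) = (\<Sum>x\<in>UNIV. \<Sum>y\<in>UNIV. cnj (v x) * M (\<phi> x) (\<phi> y) * v y)" .
  show "Im (\<Sum>x\<in>UNIV. \<Sum>y\<in>UNIV. cnj (v x) * M (\<phi> x) (\<phi> y) * v y) = 0 \<and> 0 \<le> Re (\<Sum>x\<in>UNIV. \<Sum>y\<in>UNIV. cnj (v x) * M (\<phi> x) (\<phi> y) * v y)"
    using q unfolding eq Let_def .
qed

lemma cp_blocks: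
  fixes E :: "'n::finite op \<Rightarrow> 'n op"
  assumes "completely_positive E"
  shows "psd (\<lambda>x y. E (ketbra x y) x y)" "psd (\<lambda>y y'. E (ketbra x0 x0) y y')"
proof -
  obtain h :: "'n \<Rightarrow> nat" and n where hn: "h ` UNIV = {i. i < n}" "inj h"
    using finite_imp_inj_to_nat_seg[of "UNIV :: 'n set"] by auto
  let ?S = "{..<n} \<times> (UNIV :: 'n set)"
  define w :: "nat \<times> 'n \<Rightarrow> complex" where "w i = (if fst i = h (snd i) then 1 else 0)" for i
  have "psd_on ?S (\<lambda>i j. w i * cnj (w j))" by (rule psd_rank1)
  then have M: "psd_on ?S (id_tensor E (\<lambda>i j. w i * cnj (w j)))"
    using assms unfolding completely_positive_def by blast
  have Mval: "id_tensor E (\<lambda>i j. w i * cnj (w j)) (h x, u) (h y, v) = E (ketbra x y) u v" for x y u v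
  proof -
    have "(\<lambda>a' b'. w (h x, a') * cnj (w (h y, b'))) = ketbra x y"
      using hn(2) by (auto simp: w_def ketbra_def fun_eq_iff inj_eq)
    then show ?thesis by (simp add: id_tensor_def)
  qed
  have hlt: "h z < n" for z using hn(1) by blast
  have fin: "finite ?S" by simp
  have "psd (\<lambda>x y. id_tensor E (\<lambda>i j. w i * cnj (w j)) (h x, x) (h y, y))"
    by (rule psd_sub[OF M fin]) (auto simp: inj_def hlt)
  then show "psd (\<lambda>x y. E (ketbra x y) x y)" by (simp add: Mval)
  have "psd (\<lambda>x y. id_tensor E (\<lambda>i j. w i * cnj (w j)) (h x0, x) (h x0, y))"
    by (rule psd_sub[OF M fin]) (auto simp: inj_def hlt)
  then show "psd (\<lambda>y y'. E (ketbra x0 x0) y y')" by (simp add: Mval)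
qed


definition tconj :: "('i \<Rightarrow> real) \<Rightarrow> real \<Rightarrow> 'i op \<Rightarrow> 'i op" where
  "tconj a t X = (\<lambda>u v. phase a t u v * X u v)"

lemma density_pair:
  fixes x y :: "'n::finite"
  assumes "x \<noteq> y" "c * cnj c = 1"
  shows "density_op (smult_op (complex_of_real (1/2))
     (\<lambda>i j. ((if i = x then 1 else 0) + (if i = y then c else 0)) * cnj ((if j = x then 1 else 0) + (if j = y then c else 0))))"
    (is "density_op (smult_op _ (\<lambda>i j. ?w i * cnj (?w j)))")
proof -
  have "psd (smult_op (complex_of_real (1/2)) (\<lambda>i j. ?w i * cnj (?w j)))"
    unfolding psd_def by (rule psd_smult[OF psd_rank1]) simp
  moreover have "trace_op (smult_op (complex_of_real (1/2)) (\<lambda>i j. ?w i * cnj (?w j))) = 1"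
  proof -
    have pt: "?w i * cnj (?w i) = (if i = x then 1 else 0) + (if i = y then 1 else 0)" for i
      using assms by auto
    have "trace_op (smult_op (complex_of_real (1/2)) (\<lambda>i j. ?w i * cnj (?w j)))
        = (1/2) * (\<Sum>i\<in>UNIV. ?w i * cnj (?w i))"
      by (simp add: trace_op_def smult_op_def sum_distrib_left)
    also have "\<dots> = (1/2) * (\<Sum>i\<in>UNIV. (if i = x then 1 else 0) + (if i = y then 1 else (0::complex)))"
      unfolding pt ..
    also have "\<dots> = 1" by (simp add: sum.distrib)
    finally show ?thesis .
  qed
  ultimately show ?thesis unfolding density_op_def by blast
qed

lemma density_ketbra: "density_op (ketbra (x::'n::finite) x)"
proof -
  have "ketbra x x = (\<lambda>i j. (if i = x then 1 else 0) * cnj (if j = x then 1 else (0::complex)))"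
    by (auto simp: ketbra_def fun_eq_iff)
  then have "psd (ketbra x x)" unfolding psd_def using psd_rank1 by metis
  moreover have "trace_op (ketbra x x) = 1" by (simp add: trace_op_def ketbra_def)
  ultimately show ?thesis unfolding density_op_def by blast
qed

lemma ketbra_decomp:
  fixes x y :: "'n::finite"
  assumes "x \<noteq> y"
  defines "w1 \<equiv> (\<lambda>i::'n. (if i = x then 1 else 0) + (if i = y then 1 else (0::complex)))"
  defines "w2 \<equiv> (\<lambda>i::'n. (if i = x then 1 else 0) + (if i = y then \<i> else (0::complex)))"
  shows "ketbra x y = smult_op (complex_of_real (1/2)) (\<lambda>i j. w1 i * cnj (w1 j))
     + smult_op \<i> (smult_op (complex_of_real (1/2)) (\<lambda>i j. w2 i * cnj (w2 j)))
     + smult_op (- (1 + \<i>) / 2) (ketbra x x + ketbra y y)"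
  using assms(1) by (auto simp: fun_eq_iff ketbra_def smult_op_def w1_def w2_def field_simps)

lemma tconj_add: "tconj a t (X + Y) = tconj a t X + tconj a t Y"
  by (simp add: tconj_def fun_eq_iff algebra_simps)
lemma tconj_smult: "tconj a t (smult_op c X) = smult_op c (tconj a t X)"
  by (simp add: tconj_def smult_op_def fun_eq_iff algebra_simps)

lemma cov_ketbra:
  fixes E :: "'n::finite op \<Rightarrow> 'n op"
  assumes lin: "linear_superop E"
    and cov: "\<And>\<rho>. density_op \<rho> \<Longrightarrow> E (tconj a t \<rho>) = tconj a t (E \<rho>)"
  shows "E (tconj a t (ketbra x y)) = tconj a t (E (ketbra x y))"
proof (cases "x = y")
  case True then show ?thesis using cov density_ketbra by blast
next
  case False
  define G where "G X \<longleftrightarrow> E (tconj a t X) = tconj a t (E X)" for X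
  have Gadd: "G X \<Longrightarrow> G Y \<Longrightarrow> G (X + Y)" for X Y
    using lin by (simp add: G_def tconj_add linear_superop_def)
  have Gsm: "G X \<Longrightarrow> G (smult_op c X)" for X c
    using lin by (simp add: G_def tconj_smult linear_superop_def)
  have Gd: "density_op \<rho> \<Longrightarrow> G \<rho>" for \<rho> using cov by (simp add: G_def)
  have d1: "G (smult_op (complex_of_real (1/2)) (\<lambda>i j. ((if i = x then 1 else 0) + (if i = y then 1 else 0)) * cnj ((if j = x then 1 else 0) + (if j = y then 1 else 0))))"
    by (rule Gd, rule density_pair[OF False]) simp
  have d2: "G (smult_op (complex_of_real (1/2)) (\<lambda>i j. ((if i = x then 1 else 0) + (if i = y then \<i> else 0)) * cnj ((if j = x then 1 else 0) + (if j = y then \<i> else 0))))"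
    by (rule Gd, rule density_pair[OF False]) simp
  have "G (ketbra x y)"
    unfolding ketbra_decomp[OF False]
    by (intro Gadd Gsm d1 d2 Gd density_ketbra)
  then show ?thesis by (simp add: G_def)
qed

lemma phase_neq:
  assumes "a x - a y \<noteq> a u - a v"
  shows "\<exists>t. phase a t x y = - phase a t u v"
proof -
  define d where "d = (a x - a y) - (a u - a v)"
  have d: "d \<noteq> 0" using assms by (simp add: d_def)
  define t where "t = pi / d"
  have "phase a t x y = phase a t u v * cis (- (d * t))"
    unfolding phase_def cis_mult d_def by (simp add: algebra_simps)
  also have "d * t = pi" using d by (simp add: t_def)
  also have "cis (- pi) = -1" using cis_cnj[of pi] by simp
  finally show ?thesis by auto
qed

lemma cov_zero:
  fixes E :: "'n::finite op \<Rightarrow> 'n op"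
  assumes lin: "linear_superop E"
    and cov: "\<And>t \<rho>. density_op \<rho> \<Longrightarrow> E (tconj a t \<rho>) = tconj a t (E \<rho>)"
    and ne: "a x - a y \<noteq> a u - a v"
  shows "E (ketbra x y) u v = 0"
proof -
  obtain t where t: "phase a t x y = - phase a t u v" using phase_neq[of a x y u v, OF ne] by blast
  have "tconj a t (ketbra x y) = smult_op (phase a t x y) (ketbra x y)"
    by (auto simp: tconj_def smult_op_def ketbra_def fun_eq_iff)
  then have "smult_op (phase a t x y) (E (ketbra x y)) = tconj a t (E (ketbra x y))"
    using cov_ketbra[OF lin cov] lin by (metis linear_superop_def)
  then have "phase a t x y * E (ketbra x y) u v = phase a t u v * E (ketbra x y) u v"
    by (simp add: smult_op_def tconj_def fun_eq_iff)
  then have "phase a t u v * E (ketbra x y) u v = 0" using t by simp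
  moreover have "phase a t u v \<noteq> 0" by (simp add: phase_def)
  ultimately show ?thesis by simp
qed


theorem lemma4:
  fixes a :: "'n::finite \<Rightarrow> real" and E :: "'n op \<Rightarrow> 'n op"
  assumes "nondegenerate_bohr a"
    and "quantum_channel E"
  shows "time_translation_covariant a E \<longleftrightarrow>
    (\<exists>(p :: 'n \<Rightarrow> 'n \<Rightarrow> real) (Q :: 'n op).
       (\<forall>x y. p x y \<ge> 0) \<and> (\<forall>x. (\<Sum>y\<in>UNIV. p x y) = 1) \<and>
       psd Q \<and> (\<forall>x. Q x x = complex_of_real (p x x)) \<and>
       choi E = (\<Sum>x\<in>UNIV. \<Sum>y\<in>UNIV.
                   smult_op (complex_of_real (p x y)) (kron (ketbra x x) (ketbra y y)))
              + (\<Sum>x\<in>UNIV. \<Sum>y\<in>UNIV - {x}.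
                   smult_op (Q x y) (kron (ketbra x y) (ketbra x y))))"
    (is "?L \<longleftrightarrow> (\<exists>p Q. ?R p Q)")
proof -
  have lin: "linear_superop E" and cp: "completely_positive E" and tp: "trace_preserving E"
    using assms(2) unfolding quantum_channel_def by auto
  have tc: "time_translation_covariant a E \<longleftrightarrow>
      (\<forall>t \<rho>. density_op \<rho> \<longrightarrow> E (tconj a t \<rho>) = tconj a t (E \<rho>))"
    unfolding time_translation_covariant_def conj_apply tconj_def ..
  have choi_eq: "choi E = (\<Sum>x\<in>UNIV. \<Sum>y\<in>UNIV.
                   smult_op (complex_of_real (p x y)) (kron (ketbra x x) (ketbra y y)))
              + (\<Sum>x\<in>UNIV. \<Sum>y\<in>UNIV - {x}.
                   smult_op (Q x y) (kron (ketbra x y) (ketbra x y)))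
      \<longleftrightarrow> (\<forall>x x' u v. E (ketbra x x') u v = (if x = x' then (if u = v then complex_of_real (p x u) else 0)
      else if u = x \<and> v = x' then Q x x' else 0))" for p Q
    unfolding fun_eq_iff split_paired_All choi_apply rhs_apply by blast
  show ?thesis
  proof
    assume L: ?L
    then have cov: "\<And>t \<rho>. density_op \<rho> \<Longrightarrow> E (tconj a t \<rho>) = tconj a t (E \<rho>)"
      using tc by blast
    have zero: "E (ketbra x y) u v = 0" if "\<not> ((x = u \<and> y = v) \<or> (x = y \<and> u = v))" for x y u v
    proof (rule cov_zero[OF lin cov])
      show "a x - a y \<noteq> a u - a v" using assms(1) that unfolding nondegenerate_bohr_def by blast
    qed
    define p where "p x y = Re (E (ketbra x x) y y)" for x y
    define Q where "Q x y = E (ketbra x y) x y" for x y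
    have diag: "Im (E (ketbra x x) y y) = 0 \<and> Re (E (ketbra x x) y y) \<ge> 0" for x y
      using psd_diag[OF cp_blocks(2)[OF cp, of x]] by simp
    have real: "E (ketbra x x) y y = complex_of_real (p x y)" for x y
      using diag[of x y] by (simp add: p_def complex_eq_iff)
    have tr: "(\<Sum>y\<in>UNIV. E (ketbra x x) y y) = 1" for x
    proof -
      have "(\<Sum>y\<in>UNIV. E (ketbra x x) y y) = trace_op (E (ketbra x x))" by (simp add: trace_op_def)
      also have "\<dots> = trace_op (ketbra x x)" using tp by (simp add: trace_preserving_def)
      also have "\<dots> = 1" by (simp add: trace_op_def ketbra_def)
      finally show ?thesis .
    qed
    have f1: "\<forall>x y. 0 \<le> p x y" using diag by (simp add: p_def)
    have f2: "\<forall>x. (\<Sum>y\<in>UNIV. p x y) = 1"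
    proof
      fix x show "(\<Sum>y\<in>UNIV. p x y) = 1"
        using arg_cong[OF tr[of x], of Re] by (simp add: p_def Re_sum)
    qed
    have f3: "psd Q" unfolding Q_def by (rule cp_blocks(1)[OF cp])
    have f4: "\<forall>x. Q x x = complex_of_real (p x x)" by (simp add: Q_def real)
    have ch: "\<forall>x x' u v. E (ketbra x x') u v = (if x = x' then (if u = v then complex_of_real (p x u) else 0)
           else if u = x \<and> v = x' then Q x x' else 0)"
    proof (intro allI)
      fix x x' u v
      show "E (ketbra x x') u v = (if x = x' then (if u = v then complex_of_real (p x u) else 0)
         else if u = x \<and> v = x' then Q x x' else 0)"
      proof -
        have z: "\<not> ((x = u \<and> x' = v) \<or> (x = x' \<and> u = v)) \<Longrightarrow> E (ketbra x x') u v = 0" by (rule zero)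
        show ?thesis using z real[of x u] by (auto simp: Q_def)
      qed
    qed
    have "?R p Q" using f1 f2 f3 f4 ch choi_eq[of p Q] by blast
    then show "\<exists>p Q. ?R p Q" by blast
  next
    assume "\<exists>p Q. ?R p Q"
    then obtain p Q where R: "?R p Q" by blast
    then have K: "E (ketbra x x') u v = (if x = x' then (if u = v then complex_of_real (p x u) else 0)
      else if u = x \<and> v = x' then Q x x' else 0)" for x x' u v
      unfolding choi_eq by blast
    have form: "E X u v = (if u = v then (\<Sum>x\<in>UNIV. X x x * complex_of_real (p x u)) else X u v * Q u v)" for X u v
    proof (cases "u = v")
      case True
      have "E X u v = (\<Sum>x\<in>UNIV. \<Sum>y\<in>UNIV. X x y * E (ketbra x y) u v)" by (rule linear_expand[OF lin])
      also have "\<dots> = (\<Sum>x\<in>UNIV. \<Sum>y\<in>UNIV. if x = y then X x x * complex_of_real (p x u) else 0)"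
        by (intro sum.cong refl) (auto simp: K True)
      also have "\<dots> = (\<Sum>x\<in>UNIV. X x x * complex_of_real (p x u))" by (simp add: sum.delta)
      finally show ?thesis using True by simp
    next
      case False
      have "E X u v = (\<Sum>x\<in>UNIV. \<Sum>y\<in>UNIV. X x y * E (ketbra x y) u v)" by (rule linear_expand[OF lin])
      also have "\<dots> = (\<Sum>x\<in>UNIV. \<Sum>y\<in>UNIV. if u = x \<and> v = y then X x y * Q x y else 0)"
        by (intro sum.cong refl) (auto simp: K False)
      also have "\<dots> = X u v * Q u v" by (rule sum2_delta)
      finally show ?thesis using False by simp
    qed
    have "\<forall>t \<rho>. density_op \<rho> \<longrightarrow> E (tconj a t \<rho>) = tconj a t (E \<rho>)"
    proof (intro allI impI)
      fix t \<rho>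
      show "E (tconj a t \<rho>) = tconj a t (E \<rho>)"
        by (auto simp: fun_eq_iff form tconj_def phase_def)
    qed
    then show ?L using tc by blast
  qed
qed

end
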